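(* Let $\{a_n\}_{n=1}^\infty\subset(0,1]$ and define $P_n,Q_n:\{-1,1\}^n\to\mathbb{R}$ by $P_0\equiv Q_0\equiv 1$ and \[ P_{n+1}=P_n+\varepsilon_{n+1}a_{n+1}Q_n,\qquad Q_{n+1}=\varepsilon_{n+1}a_{n+1}P_n-Q_n,\qquad n=0,1,\dots \] Then for each $n=1,2,\dots$, \[ H(\hat P_n^2)=H(\hat Q_n^2)=-\sum_{i=1}^n\Big(\prod_{1\le j\le n,\ j\ne i}(1+a_j^2)\Big)a_i^2\log a_i^2. \]
   Context: Here $\varepsilon_i$ denotes the $i$-th coordinate function $\varepsilon_i(\delta_1,\dots,\delta_m)=\delta_i$ on $\{-1,1\}^m$ for $m\ge i$ (functions on $\{-1,1\}^n$ are regarded as functions on $\{-1,1\}^{n+1}$ not depending on the last coordinate). For $A\subseteq[n]$, $W_A=\prod_{i\in A}\varepsilon_i$ and, for $g:\{-1,1\}^n\to\mathbb{R}$, $\hat g(A)=2^{-n}\sum_{\delta\in\{-1,1\}^n}g(\delta)W_A(\delta)$. The (Fourier) entropy of $g$, defined also for non-normalized $g$, is $H(\hat g^2)=-\sum_{A\subseteq[n]}\hat g(A)^2\log\hat g(A)^2$ with $0\log 0=0$; logarithms are to base $2$. *)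

theory Defs
  imports Complex_Main
begin

text \<open>Points of the cube {-1,1}^n are represented as functions nat => real with
  values in {-1,1} on the coordinates 1..n and value 0 elsewhere (canonical extension).\<close>
definition cube :: "nat \<Rightarrow> (nat \<Rightarrow> real) set" where
  "cube n = {\<delta>. (\<forall>i\<in>{1..n}. \<delta> i \<in> {-1, 1}) \<and> (\<forall>i. i \<notin> {1..n} \<longrightarrow> \<delta> i = 0)}"

definition walsh :: "nat set \<Rightarrow> (nat \<Rightarrow> real) \<Rightarrow> real" where
  "walsh A \<delta> = (\<Prod>i\<in>A. \<delta> i)"

definition fourier :: "nat \<Rightarrow> ((nat \<Rightarrow> real) \<Rightarrow> real) \<Rightarrow> nat set \<Rightarrow> real" where
  "fourier n g A = (1 / 2 ^ n) * (\<Sum>\<delta>\<in>cube n. g \<delta> * walsh A \<delta>)"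

definition xlogx :: "real \<Rightarrow> real" where
  "xlogx x = (if x = 0 then 0 else x * log 2 x)"

definition fourier_entropy :: "nat \<Rightarrow> ((nat \<Rightarrow> real) \<Rightarrow> real) \<Rightarrow> real" where
  "fourier_entropy n g = - (\<Sum>A\<in>Pow {1..n}. xlogx ((fourier n g A)^2))"

fun PQ :: "(nat \<Rightarrow> real) \<Rightarrow> nat \<Rightarrow> (nat \<Rightarrow> real) \<Rightarrow> real \<times> real" where
  "PQ a 0 \<delta> = (1, 1)"
| "PQ a (Suc n) \<delta> = (let (p, q) = PQ a n \<delta> in
      (p + \<delta> (Suc n) * a (Suc n) * q, \<delta> (Suc n) * a (Suc n) * p - q))"

definition Pn :: "(nat \<Rightarrow> real) \<Rightarrow> nat \<Rightarrow> (nat \<Rightarrow> real) \<Rightarrow> real" where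
  "Pn a n \<delta> = fst (PQ a n \<delta>)"

definition Qn :: "(nat \<Rightarrow> real) \<Rightarrow> nat \<Rightarrow> (nat \<Rightarrow> real) \<Rightarrow> real" where
  "Qn a n \<delta> = snd (PQ a n \<delta>)"

end

theory Submission
  imports Defs
begin

lemma PQ_upd: "m > n \<Longrightarrow> PQ a n (\<delta>(m:=s)) = PQ a n \<delta>"
  by (induction n) (auto simp: Let_def split: prod.splits)

lemma cube_Suc: "cube (Suc n) = (\<lambda>(\<delta>,s). \<delta>(Suc n:=s)) ` (cube n \<times> {-1,1})"
proof
  show "cube (Suc n) \<subseteq> (\<lambda>(\<delta>,s). \<delta>(Suc n:=s)) ` (cube n \<times> {-1,1})"
  proof
    fix \<delta> assume d: "\<delta> \<in> cube (Suc n)"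
    have "\<delta> = (\<lambda>(\<delta>,s). \<delta>(Suc n:=s)) (\<delta>(Suc n:=0), \<delta> (Suc n))" by auto
    moreover have "(\<delta>(Suc n:=0), \<delta> (Suc n)) \<in> cube n \<times> {-1,1}"
      using d by (auto simp: cube_def)
    ultimately show "\<delta> \<in> (\<lambda>(\<delta>,s). \<delta>(Suc n:=s)) ` (cube n \<times> {-1,1})" by blast
  qed
  show "(\<lambda>(\<delta>,s). \<delta>(Suc n:=s)) ` (cube n \<times> {-1,1}) \<subseteq> cube (Suc n)"
    by (auto simp: cube_def le_Suc_eq Ball_def)
qed

lemma cube_inj: "inj_on (\<lambda>(\<delta>,s). \<delta>(Suc n:=s)) (cube n \<times> {-1,1})"
proof (rule inj_onI, clarify)
  fix d s d' s'
  assume "d \<in> cube n" "d' \<in> cube n" and e: "d(Suc n := s) = d'(Suc n := s')"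
  then have z: "d (Suc n) = 0" "d' (Suc n) = 0" by (auto simp: cube_def)
  have "s = s'" using fun_cong[OF e, of "Suc n"] by simp
  moreover have "d = d'"
  proof
    fix i show "d i = d' i"
      using fun_cong[OF e, of i] z by (cases "i = Suc n") auto
  qed
  ultimately show "d = d' \<and> s = s'" by simp
qed

lemma sum_cube_Suc:
  "(\<Sum>\<delta>\<in>cube (Suc n). f \<delta>) = (\<Sum>\<delta>\<in>cube n. f (\<delta>(Suc n := -1)) + f (\<delta>(Suc n := 1)))"
proof -
  have "(\<Sum>\<delta>\<in>cube (Suc n). f \<delta>) = (\<Sum>x\<in>cube n \<times> {-1,1}. f ((\<lambda>(\<delta>,s). \<delta>(Suc n:=s)) x))"
    unfolding cube_Suc by (rule sum.reindex[OF cube_inj, unfolded comp_def])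
  also have "\<dots> = (\<Sum>(\<delta>,s)\<in>cube n \<times> {-1,1}. f (\<delta>(Suc n:=s)))"
    by (simp add: split_def)
  also have "\<dots> = (\<Sum>\<delta>\<in>cube n. \<Sum>s\<in>{-1,1}. f (\<delta>(Suc n:=s)))"
    by (rule sum.cartesian_product[symmetric])
  also have "\<dots> = (\<Sum>\<delta>\<in>cube n. f (\<delta>(Suc n := -1)) + f (\<delta>(Suc n := 1)))"
    by simp
  finally show ?thesis .
qed

lemma walsh_upd:
  assumes "finite A"
  shows "walsh A (\<delta>(Suc n := s)) = (if Suc n \<in> A then s else 1) * walsh (A - {Suc n}) \<delta>"
proof -
  have "walsh (A - {Suc n}) (\<delta>(Suc n := s)) = walsh (A - {Suc n}) \<delta>"
    unfolding walsh_def by (rule prod.cong) auto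
  moreover have "walsh A (\<delta>(Suc n := s)) = (if Suc n \<in> A then s else 1) * walsh (A - {Suc n}) (\<delta>(Suc n := s))"
    using assms unfolding walsh_def
    by (cases "Suc n \<in> A") (auto simp: prod.remove)
  ultimately show ?thesis by simp
qed

lemma fourier_Suc:
  assumes "finite A"
    and g: "\<And>\<delta> s. \<delta> \<in> cube n \<Longrightarrow> g (\<delta>(Suc n := s)) = u \<delta> + s * v \<delta>"
  shows "fourier (Suc n) g A = (if Suc n \<in> A then fourier n v (A - {Suc n}) else fourier n u A)"
proof -
  have "(\<Sum>\<delta>\<in>cube (Suc n). g \<delta> * walsh A \<delta>) =
     (\<Sum>\<delta>\<in>cube n. 2 * ((if Suc n \<in> A then v \<delta> else u \<delta>) * walsh (A - {Suc n}) \<delta>))"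
    unfolding sum_cube_Suc
    by (rule sum.cong) (auto simp: g walsh_upd[OF assms(1)] algebra_simps)
  moreover have "A - {Suc n} = A" if "Suc n \<notin> A" using that by auto
  ultimately show ?thesis
    unfolding fourier_def by (auto simp: sum_distrib_left[symmetric])
qed

lemma fourier_cmult: "fourier n (\<lambda>\<delta>. c * f \<delta>) A = c * fourier n f A"
  unfolding fourier_def by (simp add: sum_distrib_left algebra_simps)

lemma fourier_uminus: "fourier n (\<lambda>\<delta>. - f \<delta>) A = - fourier n f A"
  unfolding fourier_def by (simp add: sum_negf)

lemma cube_0: "cube 0 = {\<lambda>_. 0}"
  by (auto simp: cube_def)

lemma fourier_sq:
  "A \<subseteq> {1..n} \<Longrightarrow> (fourier n (Pn a n) A)^2 = (\<Prod>i\<in>A. (a i)^2)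
     \<and> (fourier n (Qn a n) A)^2 = (\<Prod>i\<in>A. (a i)^2)"
proof (induction n arbitrary: A)
  case 0
  then have "A = {}" by auto
  then show ?case by (simp add: fourier_def cube_0 walsh_def Pn_def Qn_def)
next
  case (Suc n)
  have fin: "finite A" using Suc.prems finite_subset by blast
  have hP: "Pn a (Suc n) (\<delta>(Suc n := s)) = Pn a n \<delta> + s * (a (Suc n) * Qn a n \<delta>)" for \<delta> s
    by (simp add: Pn_def Qn_def PQ_upd split: prod.splits)
  have hQ: "Qn a (Suc n) (\<delta>(Suc n := s)) = - Qn a n \<delta> + s * (a (Suc n) * Pn a n \<delta>)" for \<delta> s
    by (simp add: Pn_def Qn_def PQ_upd split: prod.splits)
  note fP = fourier_Suc[OF fin, of n "Pn a (Suc n)", OF hP]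
  note fQ = fourier_Suc[OF fin, of n "Qn a (Suc n)", OF hQ]
  show ?case
  proof (cases "Suc n \<in> A")
    case True
    have sub: "A - {Suc n} \<subseteq> {1..n}" using Suc.prems by auto
    have pr: "(\<Prod>i\<in>A. (a i)^2) = (a (Suc n))^2 * (\<Prod>i\<in>A - {Suc n}. (a i)^2)"
      using True fin by (simp add: prod.remove)
    show ?thesis using Suc.IH[OF sub] True
      by (simp add: fP fQ fourier_cmult pr power_mult_distrib)
  next
    case False
    have sub: "A \<subseteq> {1..n}" using Suc.prems False by (fastforce simp: le_Suc_eq)
    show ?thesis using Suc.IH[OF sub] False
      by (simp add: fP fQ fourier_uminus)
  qed
qed


lemma log_prod_pos: "finite A \<Longrightarrow> (\<And>i. i \<in> A \<Longrightarrow> b i > 0) \<Longrightarrow>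
   log 2 (\<Prod>i\<in>A. b i) = (\<Sum>i\<in>A. log 2 (b i))"
  by (induction A rule: finite_induct) (auto simp: log_mult_pos prod_pos)

lemma sum_pow_prod:
  fixes b :: "'a \<Rightarrow> real"
  assumes "finite S"
  shows "(\<Sum>B\<in>Pow S. \<Prod>j\<in>B. b j) = (\<Prod>j\<in>S. 1 + b j)"
  using prod_add[OF assms, of b "\<lambda>_. 1"] by (simp add: add.commute)

lemma sum_containing:
  fixes b :: "'a \<Rightarrow> real"
  assumes "finite S" "i \<in> S"
  shows "(\<Sum>A\<in>{A\<in>Pow S. i \<in> A}. \<Prod>j\<in>A. b j) = b i * (\<Prod>j\<in>S - {i}. 1 + b j)"
proof -
  have img: "{A\<in>Pow S. i \<in> A} = insert i ` Pow (S - {i})"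
  proof
    show "{A\<in>Pow S. i \<in> A} \<subseteq> insert i ` Pow (S - {i})"
    proof
      fix A assume "A \<in> {A\<in>Pow S. i \<in> A}"
      then have "A = insert i (A - {i})" "A - {i} \<in> Pow (S - {i})" by auto
      then show "A \<in> insert i ` Pow (S - {i})" by blast
    qed
    show "insert i ` Pow (S - {i}) \<subseteq> {A\<in>Pow S. i \<in> A}" using assms by auto
  qed
  have inj: "inj_on (insert i) (Pow (S - {i}))"
    by (rule inj_onI) (metis Diff_insert_absorb PowD DiffD2 insertI1 subsetD)
  have "(\<Sum>A\<in>{A\<in>Pow S. i \<in> A}. \<Prod>j\<in>A. b j) = (\<Sum>B\<in>Pow (S - {i}). \<Prod>j\<in>insert i B. b j)"
    unfolding img by (rule sum.reindex[OF inj, unfolded comp_def])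
  also have "\<dots> = (\<Sum>B\<in>Pow (S - {i}). b i * (\<Prod>j\<in>B. b j))"
  proof (rule sum.cong[OF refl])
    fix B assume B: "B \<in> Pow (S - {i})"
    then have "finite B" "i \<notin> B" using assms finite_subset by auto
    then show "(\<Prod>j\<in>insert i B. b j) = b i * (\<Prod>j\<in>B. b j)" by simp
  qed
  also have "\<dots> = b i * (\<Prod>j\<in>S - {i}. 1 + b j)"
    using assms by (simp add: sum_distrib_left[symmetric] sum_pow_prod)
  finally show ?thesis .
qed

lemma entropy_w:
  fixes b :: "'a \<Rightarrow> real"
  assumes "finite S" "\<And>i. i \<in> S \<Longrightarrow> b i > 0"
  shows "(\<Sum>A\<in>Pow S. xlogx (\<Prod>i\<in>A. b i)) =
     (\<Sum>i\<in>S. (\<Prod>j\<in>S - {i}. 1 + b j) * b i * log 2 (b i))"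
proof -
  have "(\<Sum>A\<in>Pow S. xlogx (\<Prod>i\<in>A. b i)) =
     (\<Sum>A\<in>Pow S. \<Sum>i\<in>{i\<in>S. i \<in> A}. (\<Prod>j\<in>A. b j) * log 2 (b i))"
  proof (rule sum.cong[OF refl])
    fix A assume A: "A \<in> Pow S"
    then have fA: "finite A" using assms finite_subset by auto
    have pos: "\<And>i. i \<in> A \<Longrightarrow> b i > 0" using A assms by auto
    have "(\<Prod>i\<in>A. b i) > 0" using pos by (simp add: prod_pos)
    then have "xlogx (\<Prod>i\<in>A. b i) = (\<Prod>j\<in>A. b j) * (\<Sum>i\<in>A. log 2 (b i))"
      by (simp add: xlogx_def log_prod_pos[OF fA pos])
    also have "{i\<in>S. i \<in> A} = A" using A by auto
    ultimately show "xlogx (\<Prod>i\<in>A. b i) = (\<Sum>i\<in>{i\<in>S. i \<in> A}. (\<Prod>j\<in>A. b j) * log 2 (b i))"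
      by (simp add: sum_distrib_left)
  qed
  also have "\<dots> = (\<Sum>i\<in>S. \<Sum>A\<in>{A\<in>Pow S. i \<in> A}. (\<Prod>j\<in>A. b j) * log 2 (b i))"
    by (rule sum.swap_restrict) (simp_all add: assms(1))
  also have "\<dots> = (\<Sum>i\<in>S. (\<Prod>j\<in>S - {i}. 1 + b j) * b i * log 2 (b i))"
  proof (rule sum.cong[OF refl])
    fix i assume "i \<in> S"
    then show "(\<Sum>A\<in>{A\<in>Pow S. i \<in> A}. (\<Prod>j\<in>A. b j) * log 2 (b i)) =
        (\<Prod>j\<in>S - {i}. 1 + b j) * b i * log 2 (b i)"
      using sum_containing[OF assms(1), of i b]
      by (simp add: sum_distrib_right[symmetric] algebra_simps)
  qed
  finally show ?thesis .
qed

theorem proposition3: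
  fixes a :: "nat \<Rightarrow> real" and n :: nat
  assumes "\<forall>k\<ge>1. 0 < a k \<and> a k \<le> 1"
    and "n \<ge> 1"
  shows "fourier_entropy n (Pn a n) =
           - (\<Sum>i=1..n. (\<Prod>j\<in>{1..n} - {i}. 1 + (a j)^2) * (a i)^2 * log 2 ((a i)^2))
       \<and> fourier_entropy n (Qn a n) =
           - (\<Sum>i=1..n. (\<Prod>j\<in>{1..n} - {i}. 1 + (a j)^2) * (a i)^2 * log 2 ((a i)^2))"
proof -
  have pos: "\<And>i. i \<in> {1..n} \<Longrightarrow> (a i)^2 > 0" using assms(1) by auto
  note E = entropy_w[OF finite_atLeastAtMost pos]
  have "fourier_entropy n (Pn a n) = - (\<Sum>A\<in>Pow {1..n}. xlogx (\<Prod>i\<in>A. (a i)^2))"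
    unfolding fourier_entropy_def by (intro arg_cong[where f=uminus] sum.cong) (auto simp: fourier_sq)
  moreover have "fourier_entropy n (Qn a n) = - (\<Sum>A\<in>Pow {1..n}. xlogx (\<Prod>i\<in>A. (a i)^2))"
    unfolding fourier_entropy_def by (intro arg_cong[where f=uminus] sum.cong) (auto simp: fourier_sq)
  ultimately show ?thesis using E by simp
qed

end
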